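(* Let $A=[a_1,\dots,a_N]$ and $B=[b_1,\dots,b_N]$ be $N\times N$ complex matrices with columns $a_i,b_i$, let $\theta$ be a real parameter, and let $M(\theta)=(1-\theta)A+\theta B$ with columns $m_k(\theta)=(1-\theta)a_k+\theta b_k$. Define recursively (the modified, unnormalized Gram–Schmidt procedure) $z_1=v_1=m_1$ and, for $k\ge 2$, \[ v_k=m_k-\sum_{j=1}^{k-1}\frac{\langle z_j,m_k\rangle}{\|z_j\|^2}\,z_j,\qquad z_k=\Big(\prod_{j=1}^{k-1}\|z_j\|^2\Big)\,v_k . \] Then for every $k\in\{1,\dots,N\}$, $v_k(\theta)\in\mathbf{p}_{D_k+1}(\theta)/q_{D_k}(\theta)$, where $D_k=3^{k-1}-1$; that is, $v_k(\theta)$ can be written as a vector whose entries are polynomials in $\theta$ of degree at most $D_k+1$ divided by a common polynomial in $\theta$ of degree at most $D_k$.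
   Context: $\langle x,y\rangle=\sum_i \overline{x_i}y_i$ is the standard inner product on $\mathbb{C}^N$ and $\|x\|^2=\langle x,x\rangle$; since $\theta$ is real, $\langle z_j,m_k\rangle$ and $\|z_j\|^2$ are polynomials in $\theta$ with complex coefficients. Notation: $\mathbf{p}_\ell(\theta)$ denotes vectors each of whose entries is a polynomial of degree $\ell$ in $\theta$, $q_r(\theta)$ denotes polynomial functions of degree $r$ in $\theta$, and $\mathbf{p}_\ell(\theta)/q_r(\theta)$ denotes vectors of rational functions with numerators of degree $\ell$ and denominators of degree $r$. *)

theory Defs
  imports Complex_Main "HOL-Computational_Algebra.Polynomial"
begin

text \<open>Vectors in C^N are functions nat => complex, entries indexed by 1..N.
  A matrix is given by its columns: a k is the k-th column (k = 1..N).\<close>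

definition cinner :: "nat \<Rightarrow> (nat \<Rightarrow> complex) \<Rightarrow> (nat \<Rightarrow> complex) \<Rightarrow> complex" where
  "cinner N x y = (\<Sum>i=1..N. cnj (x i) * y i)"

definition cnormsq :: "nat \<Rightarrow> (nat \<Rightarrow> complex) \<Rightarrow> real" where
  "cnormsq N x = (\<Sum>i=1..N. (cmod (x i))\<^sup>2)"

definition mcol :: "(nat \<Rightarrow> nat \<Rightarrow> complex) \<Rightarrow> (nat \<Rightarrow> nat \<Rightarrow> complex) \<Rightarrow> real \<Rightarrow> nat \<Rightarrow> nat \<Rightarrow> complex" where
  "mcol a b \<theta> k i = (1 - complex_of_real \<theta>) * a k i + complex_of_real \<theta> * b k i"

primrec gs :: "nat \<Rightarrow> (nat \<Rightarrow> nat \<Rightarrow> complex) \<Rightarrow> (nat \<Rightarrow> nat \<Rightarrow> complex) \<Rightarrow> real \<Rightarrow> nat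
    \<Rightarrow> ((nat \<Rightarrow> complex) \<times> (nat \<Rightarrow> complex)) list" where
  "gs N a b \<theta> 0 = []"
| "gs N a b \<theta> (Suc n) =
     (let prev = gs N a b \<theta> n;
          zs = map snd prev;
          mk = mcol a b \<theta> (Suc n);
          v = (\<lambda>i. mk i - (\<Sum>z\<leftarrow>zs. cinner N z mk / complex_of_real (cnormsq N z) * z i));
          z = (\<lambda>i. complex_of_real (\<Prod>w\<leftarrow>zs. cnormsq N w) * v i)
      in prev @ [(v, z)])"

definition gs_v :: "nat \<Rightarrow> (nat \<Rightarrow> nat \<Rightarrow> complex) \<Rightarrow> (nat \<Rightarrow> nat \<Rightarrow> complex) \<Rightarrow> real \<Rightarrow> nat \<Rightarrow> (nat \<Rightarrow> complex)" where
  "gs_v N a b \<theta> k = fst (gs N a b \<theta> k ! (k - 1))"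

definition gs_z :: "nat \<Rightarrow> (nat \<Rightarrow> nat \<Rightarrow> complex) \<Rightarrow> (nat \<Rightarrow> nat \<Rightarrow> complex) \<Rightarrow> real \<Rightarrow> nat \<Rightarrow> (nat \<Rightarrow> complex)" where
  "gs_z N a b \<theta> k = snd (gs N a b \<theta> k ! (k - 1))"

end

theory Submission
  imports Defs
begin

definition MC :: "(nat \<Rightarrow> nat \<Rightarrow> complex) \<Rightarrow> (nat \<Rightarrow> nat \<Rightarrow> complex) \<Rightarrow> nat \<Rightarrow> nat \<Rightarrow> complex poly" where
  "MC a b k i = [: a k i, b k i - a k i :]"

definition PI :: "nat \<Rightarrow> (nat \<Rightarrow> complex poly) \<Rightarrow> (nat \<Rightarrow> complex poly) \<Rightarrow> complex poly" where
  "PI N X Y = (\<Sum>i=1..N. map_poly cnj (X i) * Y i)"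

lemma MC_eval: "poly (MC a b k i) (complex_of_real t) = mcol a b t k i"
  by (simp add: MC_def mcol_def algebra_simps)

lemma MC_deg: "degree (MC a b k i) \<le> 1"
  by (simp add: MC_def)

lemma PI_eval:
  assumes "\<And>i. i \<in> {1..N} \<Longrightarrow> x i = poly (X i) (complex_of_real t)"
      and "\<And>i. i \<in> {1..N} \<Longrightarrow> y i = poly (Y i) (complex_of_real t)"
  shows "poly (PI N X Y) (complex_of_real t) = cinner N x y"
  unfolding PI_def cinner_def poly_sum
  by (rule sum.cong) (auto simp: assms)

lemma PN_eval:
  assumes "\<And>i. i \<in> {1..N} \<Longrightarrow> x i = poly (X i) (complex_of_real t)"
  shows "poly (PI N X X) (complex_of_real t) = complex_of_real (cnormsq N x)"
proof -
  have "poly (PI N X X) (complex_of_real t) = cinner N x x" by (rule PI_eval) (auto simp: assms)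
  also have "\<dots> = complex_of_real (cnormsq N x)"
    unfolding cinner_def cnormsq_def of_real_sum
    by (rule sum.cong) (simp_all only: complex_norm_square mult.commute)
  finally show ?thesis .
qed

lemma PI_deg:
  assumes "\<And>i. degree (X i) \<le> dx" "\<And>i. degree (Y i) \<le> dy"
  shows "degree (PI N X Y) \<le> dx + dy"
  unfolding PI_def
proof (rule degree_sum_le)
  fix i
  have "degree (map_poly cnj (X i) * Y i) \<le> degree (map_poly cnj (X i)) + degree (Y i)"
    by (rule degree_mult_le)
  also have "\<dots> \<le> dx + dy" using add_mono[OF assms(1)[of i] assms(2)[of i]] by (simp add: degree_map_poly)
  finally show "degree (map_poly cnj (X i) * Y i) \<le> dx + dy" .
qed simp

lemma cnormsq_zero:
  assumes "cnormsq N x = 0" "i \<in> {1..N}"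
  shows "x i = 0"
proof -
  have "\<forall>j\<in>{1..N}. (cmod (x j))\<^sup>2 = 0"
    using assms(1) unfolding cnormsq_def by (subst sum_nonneg_eq_0_iff[symmetric]) auto
  then show ?thesis using assms(2) by auto
qed

lemma gs_length: "length (gs N a b t n) = n"
  by (induction n) (simp_all add: Let_def)

lemma gs_nth: "j < n \<Longrightarrow> gs N a b t n ! j = gs N a b t (Suc j) ! j"
proof (induction n)
  case (Suc n)
  show ?case
  proof (cases "j < n")
    case True then show ?thesis using Suc by (simp add: Let_def nth_append gs_length)
  next
    case False then have "j = n" using Suc.prems by simp
    then show ?thesis by simp
  qed
qed simp

lemma gs_map_snd: "map snd (gs N a b t n) = map (\<lambda>j. gs_z N a b t (Suc j)) [0..<n]"
  by (rule nth_equalityI) (auto simp: gs_length gs_z_def gs_nth)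

lemma gs_last: "gs N a b t (Suc n) ! n =
   ((\<lambda>i. mcol a b t (Suc n) i - (\<Sum>j<n. cinner N (gs_z N a b t (Suc j)) (mcol a b t (Suc n)) /
       complex_of_real (cnormsq N (gs_z N a b t (Suc j))) * gs_z N a b t (Suc j) i)),
    (\<lambda>i. complex_of_real (\<Prod>j<n. cnormsq N (gs_z N a b t (Suc j))) *
      (mcol a b t (Suc n) i - (\<Sum>j<n. cinner N (gs_z N a b t (Suc j)) (mcol a b t (Suc n)) /
       complex_of_real (cnormsq N (gs_z N a b t (Suc j))) * gs_z N a b t (Suc j) i))))"
  unfolding gs.simps Let_def
  unfolding gs_map_snd map_map
  by (simp add: nth_append gs_length comp_def flip: sum.distinct_set_conv_list prod.distinct_set_conv_list atLeast0LessThan)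

lemma gs_v_Suc: "gs_v N a b t (Suc n) = (\<lambda>i. mcol a b t (Suc n) i -
   (\<Sum>j<n. cinner N (gs_z N a b t (Suc j)) (mcol a b t (Suc n)) /
       complex_of_real (cnormsq N (gs_z N a b t (Suc j))) * gs_z N a b t (Suc j) i))"
  unfolding gs_v_def by (simp only: gs_last diff_Suc_1 fst_conv)

lemma gs_z_Suc: "gs_z N a b t (Suc n) = (\<lambda>i. complex_of_real (\<Prod>j<n. cnormsq N (gs_z N a b t (Suc j)))
     * gs_v N a b t (Suc n) i)"
  unfolding gs_v_Suc by (subst gs_z_def) (simp only: gs_last diff_Suc_1 snd_conv)


lemma term_eq:
  fixes f :: "nat \<Rightarrow> complex"
  assumes "finite S" "j \<in> S \<Longrightarrow> f j = 0 \<Longrightarrow> z = 0" "j \<notin> S \<Longrightarrow> z = 0"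
  shows "(\<Prod>l\<in>S. f l) * (c / f j * z) = c * (\<Prod>l\<in>S-{j}. f l) * z"
proof (cases "j \<in> S")
  case True
  then have "(\<Prod>l\<in>S. f l) = f j * (\<Prod>l\<in>S-{j}. f l)" using assms(1) by (simp add: prod.remove)
  then show ?thesis using assms(2) True by (cases "f j = 0") (auto simp: field_simps)
qed (use assms(3) in simp)

lemma sum3: "(\<Sum>l<n. 2 * 3 ^ l) + 1 = (3::nat) ^ n"
  by (induction n) auto

lemma real_nonroot:
  fixes p :: "complex poly"
  assumes "p \<noteq> 0"
  shows "\<exists>t::real. poly p (complex_of_real t) \<noteq> 0"
proof (rule ccontr)
  assume "\<not> ?thesis"
  then have "range complex_of_real \<subseteq> {x. poly p x = 0}" by auto
  then have "finite (range complex_of_real)" using poly_roots_finite[OF assms] finite_subset by blast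
  then have "finite (UNIV :: real set)" using finite_imageD inj_of_real by blast
  then show False using infinite_UNIV_char_0 by blast
qed

lemma deg_term:
  assumes "degree A \<le> 3 ^ j + 1" "degree B \<le> s" "degree C \<le> 3 ^ j"
    "2 * 3 ^ j + s + 1 \<le> (3::nat) ^ n"
  shows "degree (A * B * (C :: complex poly)) \<le> 3 ^ n"
proof -
  have "degree (A * B * C) \<le> degree A + degree B + degree C"
    by (meson add_mono_thms_linordered_semiring(3) degree_mult_le order_trans)
  then show ?thesis using assms by linarith
qed

lemma z_poly:
  "\<exists>Z :: nat \<Rightarrow> nat \<Rightarrow> complex poly. \<forall>j<n. (\<forall>i. degree (Z j i) \<le> 3 ^ j) \<and>
     (\<forall>t. \<forall>i\<in>{1..N}. gs_z N a b t (Suc j) i = poly (Z j i) (complex_of_real t))"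
proof (induction n)
  case 0
  then show ?case by simp
next
  case (Suc n)
  then obtain Z where Zd: "\<And>j i. j < n \<Longrightarrow> degree (Z j i) \<le> 3 ^ j"
    and Ze: "\<And>j t i. j < n \<Longrightarrow> i \<in> {1..N} \<Longrightarrow> gs_z N a b t (Suc j) i = poly (Z j i) (complex_of_real t)"
    by blast
  define PN where "PN j = PI N (Z j) (Z j)" for j
  define Zn where "Zn i = (\<Prod>j<n. PN j) * MC a b (Suc n) i -
     (\<Sum>j<n. PI N (Z j) (MC a b (Suc n)) * (\<Prod>l\<in>{..<n}-{j}. PN l) * Z j i)" for i
  have PNd: "degree (PN j) \<le> 2 * 3 ^ j" if "j < n" for j
    using PI_deg[of "Z j" "3^j" "Z j" "3^j" N] Zd that unfolding PN_def by simp
  have PMd: "degree (PI N (Z j) (MC a b (Suc n))) \<le> 3 ^ j + 1" if "j < n" for j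
    using PI_deg[of "Z j" "3^j" "MC a b (Suc n)" 1 N] Zd that MC_deg by simp
  have Znd: "degree (Zn i) \<le> 3 ^ n" for i
    unfolding Zn_def
  proof (rule degree_diff_le)
    have "degree (\<Prod>j<n. PN j) \<le> (\<Sum>j<n. degree (PN j))"
      using degree_prod_sum_le[of "{..<n}" PN] by (simp add: comp_def)
    also have "\<dots> \<le> (\<Sum>j<n. 2 * 3 ^ j)" by (rule sum_mono) (simp add: PNd)
    finally have "degree (\<Prod>j<n. PN j) + 1 \<le> 3 ^ n" using sum3[of n] by linarith
    then show "degree ((\<Prod>j<n. PN j) * MC a b (Suc n) i) \<le> 3 ^ n"
      using degree_mult_le[of "\<Prod>j<n. PN j" "MC a b (Suc n) i"] MC_deg[of a b "Suc n" i] by linarith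
    show "degree (\<Sum>j<n. PI N (Z j) (MC a b (Suc n)) * (\<Prod>l\<in>{..<n}-{j}. PN l) * Z j i) \<le> 3 ^ n"
    proof (rule degree_sum_le)
      fix j assume "j \<in> {..<n}"
      then have j: "j < n" by simp
      have "degree (\<Prod>l\<in>{..<n}-{j}. PN l) \<le> (\<Sum>l\<in>{..<n}-{j}. degree (PN l))"
        using degree_prod_sum_le[of "{..<n}-{j}" PN] by (simp add: comp_def)
      also have "\<dots> \<le> (\<Sum>l\<in>{..<n}-{j}. 2 * 3 ^ l)" by (rule sum_mono) (simp add: PNd)
      finally have B: "degree (\<Prod>l\<in>{..<n}-{j}. PN l) \<le> (\<Sum>l\<in>{..<n}-{j}. 2 * 3 ^ l)" .
      have "(\<Sum>l<n. 2 * 3 ^ l) = 2 * 3 ^ j + (\<Sum>l\<in>{..<n}-{j}. 2 * (3::nat) ^ l)"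
        using j by (simp add: sum.remove)
      then have "2 * 3 ^ j + (\<Sum>l\<in>{..<n}-{j}. 2 * 3 ^ l) + 1 \<le> (3::nat) ^ n"
        using sum3[of n] by simp
      then show "degree (PI N (Z j) (MC a b (Suc n)) * (\<Prod>l\<in>{..<n}-{j}. PN l) * Z j i) \<le> 3 ^ n"
        using deg_term[OF PMd[OF j] B Zd[OF j]] by blast
    qed simp
  qed
  have Zne: "gs_z N a b t (Suc n) i = poly (Zn i) (complex_of_real t)" if i: "i \<in> {1..N}" for t i
  proof -
    define z where "z j = gs_z N a b t (Suc j)" for j
    define m where "m = mcol a b t (Suc n)"
    define nn where "nn j = complex_of_real (cnormsq N (z j))" for j
    define c where "c j = cinner N (z j) m" for j
    have pPN: "poly (PN j) (complex_of_real t) = nn j" if "j < n" for j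
      unfolding PN_def nn_def by (rule PN_eval) (simp add: Ze that z_def)
    have pPI: "poly (PI N (Z j) (MC a b (Suc n))) (complex_of_real t) = c j" if "j < n" for j
      unfolding c_def by (rule PI_eval) (simp_all add: Ze that z_def m_def MC_eval)
    have "gs_z N a b t (Suc n) i = (\<Prod>j<n. nn j) * (m i - (\<Sum>j<n. c j / nn j * z j i))"
      unfolding z_def m_def nn_def c_def by (simp only: gs_z_Suc[of N a b t n] gs_v_Suc[of N a b t n] of_real_prod)
    also have "\<dots> = (\<Prod>j<n. nn j) * m i - (\<Sum>j<n. (\<Prod>l<n. nn l) * (c j / nn j * z j i))"
      by (simp add: right_diff_distrib sum_distrib_left)
    also have "\<dots> = (\<Prod>j<n. nn j) * m i - (\<Sum>j<n. c j * (\<Prod>l\<in>{..<n}-{j}. nn l) * z j i)"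
    proof -
      have "(\<Prod>l<n. nn l) * (c j / nn j * z j i) = c j * (\<Prod>l\<in>{..<n}-{j}. nn l) * z j i" if "j < n" for j
        by (rule term_eq) (use that i cnormsq_zero in \<open>auto simp: nn_def\<close>)
      then show ?thesis by simp
    qed
    also have "\<dots> = poly (Zn i) (complex_of_real t)"
      unfolding Zn_def poly_diff poly_mult poly_sum poly_prod
      apply (simp add: pPN pPI i z_def m_def MC_eval)
      apply (intro sum.cong refl)
      using Ze i by auto
    finally show ?thesis .
  qed
  show ?case
    by (rule exI[of _ "Z(n := Zn)"]) (auto simp: Zd Ze Znd Zne less_Suc_eq)
qed


theorem lemma5:
  fixes N :: nat and a b :: "nat \<Rightarrow> nat \<Rightarrow> complex" and k :: nat
  assumes "1 \<le> k" and "k \<le> N"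
  shows "\<exists>(p :: nat \<Rightarrow> complex poly) (q :: complex poly).
           q \<noteq> 0 \<and> degree q \<le> 3 ^ (k - 1) - 1 \<and>
           (\<forall>i\<in>{1..N}. degree (p i) \<le> 3 ^ (k - 1)) \<and>
           (\<forall>\<theta>::real. poly q (complex_of_real \<theta>) \<noteq> 0 \<longrightarrow>
              (\<forall>i\<in>{1..N}. gs_v N a b \<theta> k i
                 = poly (p i) (complex_of_real \<theta>) / poly q (complex_of_real \<theta>)))"
proof -
  obtain n where k: "k = Suc n" using assms(1) by (cases k) auto
  obtain Z where Zd: "\<And>j i. j < n \<Longrightarrow> degree (Z j i) \<le> 3 ^ j"
    and Ze: "\<And>j t i. j < n \<Longrightarrow> i \<in> {1..N} \<Longrightarrow> gs_z N a b t (Suc j) i = poly (Z j i) (complex_of_real t)"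
    using z_poly[of n N a b] by blast
  define PN where "PN j = PI N (Z j) (Z j)" for j
  define S where "S = {j. j < n \<and> (\<exists>i\<in>{1..N}. Z j i \<noteq> 0)}"
  have S: "S \<subseteq> {..<n}" "finite S" unfolding S_def by auto
  define q where "q = (\<Prod>j\<in>S. PN j)"
  define p where "p i = q * MC a b (Suc n) i -
     (\<Sum>j<n. PI N (Z j) (MC a b (Suc n)) * (\<Prod>l\<in>S-{j}. PN l) * Z j i)" for i
  have PNd: "degree (PN j) \<le> 2 * 3 ^ j" if "j < n" for j
    using PI_deg[of "Z j" "3^j" "Z j" "3^j" N] Zd that unfolding PN_def by simp
  have PMd: "degree (PI N (Z j) (MC a b (Suc n))) \<le> 3 ^ j + 1" if "j < n" for j
    using PI_deg[of "Z j" "3^j" "MC a b (Suc n)" 1 N] Zd that MC_deg by simp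
  have PNnz: "PN j \<noteq> 0" if "j \<in> S" for j
  proof -
    from that obtain i where j: "j < n" and i: "i \<in> {1..N}" "Z j i \<noteq> 0" unfolding S_def by auto
    obtain t where t: "poly (Z j i) (complex_of_real t) \<noteq> 0" using real_nonroot[OF i(2)] by blast
    define x where "x i' = poly (Z j i') (complex_of_real t)" for i'
    have "poly (PN j) (complex_of_real t) = complex_of_real (cnormsq N x)"
      unfolding PN_def by (rule PN_eval) (simp add: x_def)
    moreover have "cnormsq N x \<noteq> 0" using cnormsq_zero[of N x i] i t x_def by auto
    ultimately show ?thesis by auto
  qed
  have qnz: "q \<noteq> 0" unfolding q_def using PNnz S(2) by (simp add: prod_zero_iff)
  have qd: "degree q \<le> 3 ^ n - 1"
  proof -
    have "degree q \<le> (\<Sum>j\<in>S. degree (PN j))"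
      unfolding q_def using degree_prod_sum_le[OF S(2), of PN] by (simp add: comp_def)
    also have "\<dots> \<le> (\<Sum>j\<in>S. 2 * 3 ^ j)" by (rule sum_mono) (use S PNd in auto)
    also have "\<dots> \<le> (\<Sum>j<n. 2 * 3 ^ j)" by (rule sum_mono2) (use S in auto)
    finally show ?thesis using sum3[of n] by linarith
  qed
  have pd: "degree (p i) \<le> 3 ^ n" for i
    unfolding p_def
  proof (rule degree_diff_le)
    have "degree q + 1 \<le> 3 ^ n" using qd sum3[of n] by linarith
    then show "degree (q * MC a b (Suc n) i) \<le> 3 ^ n"
      using degree_mult_le[of q "MC a b (Suc n) i"] MC_deg[of a b "Suc n" i] by linarith
    show "degree (\<Sum>j<n. PI N (Z j) (MC a b (Suc n)) * (\<Prod>l\<in>S-{j}. PN l) * Z j i) \<le> 3 ^ n"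
    proof (rule degree_sum_le)
      fix j assume "j \<in> {..<n}"
      then have j: "j < n" by simp
      have "degree (\<Prod>l\<in>S-{j}. PN l) \<le> (\<Sum>l\<in>S-{j}. degree (PN l))"
        using degree_prod_sum_le[of "S-{j}" PN] S by (simp add: comp_def)
      also have "\<dots> \<le> (\<Sum>l\<in>S-{j}. 2 * 3 ^ l)" by (rule sum_mono) (use S PNd in auto)
      also have "\<dots> \<le> (\<Sum>l\<in>{..<n}-{j}. 2 * 3 ^ l)" by (rule sum_mono2) (use S in auto)
      finally have B: "degree (\<Prod>l\<in>S-{j}. PN l) \<le> (\<Sum>l\<in>{..<n}-{j}. 2 * 3 ^ l)" .
      have "(\<Sum>l<n. 2 * 3 ^ l) = 2 * 3 ^ j + (\<Sum>l\<in>{..<n}-{j}. 2 * (3::nat) ^ l)"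
        using j by (simp add: sum.remove)
      then have "2 * 3 ^ j + (\<Sum>l\<in>{..<n}-{j}. 2 * 3 ^ l) + 1 \<le> (3::nat) ^ n"
        using sum3[of n] by simp
      then show "degree (PI N (Z j) (MC a b (Suc n)) * (\<Prod>l\<in>S-{j}. PN l) * Z j i) \<le> 3 ^ n"
        using deg_term[OF PMd[OF j] B Zd[OF j]] by blast
    qed simp
  qed
  have pe: "gs_v N a b t (Suc n) i = poly (p i) (complex_of_real t) / poly q (complex_of_real t)"
    if qt: "poly q (complex_of_real t) \<noteq> 0" and i: "i \<in> {1..N}" for t i
  proof -
    define z where "z j = gs_z N a b t (Suc j)" for j
    define m where "m = mcol a b t (Suc n)"
    define nn where "nn j = complex_of_real (cnormsq N (z j))" for j
    define c where "c j = cinner N (z j) m" for j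
    have pPN: "poly (PN j) (complex_of_real t) = nn j" if "j < n" for j
      unfolding PN_def nn_def by (rule PN_eval) (simp add: Ze that z_def)
    have pPI: "poly (PI N (Z j) (MC a b (Suc n))) (complex_of_real t) = c j" if "j < n" for j
      unfolding c_def by (rule PI_eval) (simp_all add: Ze that z_def m_def MC_eval)
    have pq: "poly q (complex_of_real t) = (\<Prod>j\<in>S. nn j)"
      unfolding q_def poly_prod by (rule prod.cong) (use S pPN in auto)
    have "poly q (complex_of_real t) * gs_v N a b t (Suc n) i
        = (\<Prod>j\<in>S. nn j) * (m i - (\<Sum>j<n. c j / nn j * z j i))"
      unfolding pq z_def m_def nn_def c_def by (simp only: gs_v_Suc[of N a b t n])
    also have "\<dots> = (\<Prod>j\<in>S. nn j) * m i - (\<Sum>j<n. (\<Prod>l\<in>S. nn l) * (c j / nn j * z j i))"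
      by (simp add: right_diff_distrib sum_distrib_left)
    also have "\<dots> = (\<Prod>j\<in>S. nn j) * m i - (\<Sum>j<n. c j * (\<Prod>l\<in>S-{j}. nn l) * z j i)"
    proof -
      have "(\<Prod>l\<in>S. nn l) * (c j / nn j * z j i) = c j * (\<Prod>l\<in>S-{j}. nn l) * z j i" if "j < n" for j
      proof (rule term_eq[OF S(2)])
        show "z j i = 0" if "j \<in> S" "nn j = 0" using that qt pq S(2) by simp
        show "z j i = 0" if "j \<notin> S" using that \<open>j < n\<close> i Ze[of j i t] unfolding S_def z_def by auto
      qed
      then show ?thesis by simp
    qed
    also have "\<dots> = poly (p i) (complex_of_real t)"
      unfolding p_def poly_diff poly_mult poly_sum poly_prod pq[symmetric]
      apply (simp add: pq pPI i m_def MC_eval)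
      apply (intro sum.cong refl)
      using Ze i S pPN z_def by (auto intro!: prod.cong)
    finally show ?thesis using qt by (simp add: eq_divide_eq mult.commute)
  qed
  show ?thesis
    unfolding k using qnz qd pd pe by (intro exI[of _ p] exI[of _ q]) simp
qed

end
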